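(* There is a functor $E:\mathbf{FinGraph}^<_\star\to\mathbf{FinLoset}$ that linearly orders the vertices of a given graph according to the ordering on the neighborhood of its distinguished point: for $G$ with distinguished point $v_0$, $E(G)$ is the set $\{v_0\}\cup\{u : v_0\to u\}$ with $v_0$ least and, for $u,v\neq v_0$, $u<v$ iff $v_0\to u\triangleleft v_0\to v$; and for a morphism $h$, $E(h)(v)=h(v)$.
   Context: A (directed) graph is $(V,\to)$ with $\to\subseteq V\times V$; $N(u)$ is the set of outgoing edges of $u$. A pointed graph has a distinguished vertex $v_0$; connected means every vertex is reachable by a path from $v_0$. A finite edge-ordered graph is a finite graph with a strict linear order $\triangleleft$ on each neighborhood. A homomorphism of finite pointed edge-ordered graphs $h:G\to H$ is a vertex map with (i) $u\to v$ implies $h(u)\to h(v)$; (ii) the distinguished vertex of $G$ is the unique vertex mapped to the distinguished vertex of $H$; (iii) $u\to v_1\triangleleft u\to v_2$ implies $h(u)\to h(v_1)\triangleleft h(u)\to h(v_2)$. $\mathbf{FinGraph}^<_\star$ is the category of connected, finite, pointed, edge-ordered graphs with such homomorphisms; $\mathbf{FinLoset}$ is the category of finite linearly ordered sets with monotone functions. *)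

theory Defs
  imports Main "HOL-Library.FuncSet"
begin

text \<open>A pointed edge-ordered graph: vertex set, edge relation, distinguished vertex,
  and for each vertex u a relation eord u v1 v2 meaning (u->v1) is before (u->v2).\<close>
record 'a peo_graph =
  verts :: "'a set"
  arcs  :: "'a rel"
  root  :: 'a
  eord  :: "'a \<Rightarrow> 'a \<Rightarrow> 'a \<Rightarrow> bool"

definition nbhd :: "'a peo_graph \<Rightarrow> 'a \<Rightarrow> 'a set" where
  "nbhd G u = {v. (u, v) \<in> arcs G}"

definition strict_linear_on :: "'a set \<Rightarrow> ('a \<Rightarrow> 'a \<Rightarrow> bool) \<Rightarrow> bool" where
  "strict_linear_on A r \<longleftrightarrow>
     (\<forall>x\<in>A. \<not> r x x) \<and>
     (\<forall>x\<in>A. \<forall>y\<in>A. \<forall>z\<in>A. r x y \<longrightarrow> r y z \<longrightarrow> r x z) \<and>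
     (\<forall>x\<in>A. \<forall>y\<in>A. x \<noteq> y \<longrightarrow> r x y \<or> r y x)"

definition fin_graph :: "'a peo_graph \<Rightarrow> bool" where
  "fin_graph G \<longleftrightarrow>
     finite (verts G) \<and> arcs G \<subseteq> verts G \<times> verts G \<and> root G \<in> verts G \<and>
     (\<forall>v\<in>verts G. (root G, v) \<in> (arcs G)\<^sup>*) \<and>
     (\<forall>u\<in>verts G. strict_linear_on (nbhd G u) (eord G u) \<and>
        (\<forall>v1 v2. eord G u v1 v2 \<longrightarrow> v1 \<in> nbhd G u \<and> v2 \<in> nbhd G u))"

definition graph_hom :: "'a peo_graph \<Rightarrow> 'b peo_graph \<Rightarrow> ('a \<Rightarrow> 'b) \<Rightarrow> bool" where
  "graph_hom G H h \<longleftrightarrow>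
     fin_graph G \<and> fin_graph H \<and>
     (\<forall>v\<in>verts G. h v \<in> verts H) \<and>
     (\<forall>u v. (u, v) \<in> arcs G \<longrightarrow> (h u, h v) \<in> arcs H) \<and>
     (\<forall>v\<in>verts G. h v = root H \<longleftrightarrow> v = root G) \<and>
     (\<forall>u v1 v2. (u, v1) \<in> arcs G \<longrightarrow> (u, v2) \<in> arcs G \<longrightarrow> eord G u v1 v2 \<longrightarrow>
          eord H (h u) (h v1) (h v2))"

definition E_obj :: "'a peo_graph \<Rightarrow> 'a set" where
  "E_obj G = insert (root G) (nbhd G (root G))"

definition E_less :: "'a peo_graph \<Rightarrow> 'a \<Rightarrow> 'a \<Rightarrow> bool" where
  "E_less G x y \<longleftrightarrow>
     (x = root G \<and> y \<noteq> root G) \<or>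
     (x \<noteq> root G \<and> y \<noteq> root G \<and> eord G (root G) x y)"

definition E_mor :: "'a peo_graph \<Rightarrow> ('a \<Rightarrow> 'b) \<Rightarrow> ('a \<Rightarrow> 'b)" where
  "E_mor G h = restrict h (E_obj G)"

end

theory Submission
  imports Defs
begin

lemma part1:
  assumes "fin_graph G"
  shows "finite (E_obj G) \<and> strict_linear_on (E_obj G) (E_less G)"
proof -
  have sub: "nbhd G (root G) \<subseteq> verts G" using assms unfolding fin_graph_def nbhd_def by auto
  have fin: "finite (E_obj G)" using assms sub unfolding fin_graph_def E_obj_def
    by (auto intro: finite_subset)
  have sl: "strict_linear_on (nbhd G (root G)) (eord G (root G))"
    using assms unfolding fin_graph_def by auto
  let ?N = "nbhd G (root G)" and ?r = "eord G (root G)" and ?o = "root G"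
  have irr: "\<forall>x\<in>?N. \<not> ?r x x"
    and tr: "\<forall>x\<in>?N. \<forall>y\<in>?N. \<forall>z\<in>?N. ?r x y \<longrightarrow> ?r y z \<longrightarrow> ?r x z"
    and tot: "\<forall>x\<in>?N. \<forall>y\<in>?N. x \<noteq> y \<longrightarrow> ?r x y \<or> ?r y x"
    using sl unfolding strict_linear_on_def by blast+
  have "strict_linear_on (E_obj G) (E_less G)"
    unfolding strict_linear_on_def
  proof (intro conjI ballI impI)
    fix x assume "x \<in> E_obj G"
    then show "\<not> E_less G x x" using irr unfolding E_obj_def E_less_def by auto
  next
    fix x y z assume x: "x \<in> E_obj G" and y: "y \<in> E_obj G" and z: "z \<in> E_obj G"
      and xy: "E_less G x y" and yz: "E_less G y z"
    show "E_less G x z"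
    proof (cases "x = ?o")
      case True then show ?thesis using yz unfolding E_less_def by auto
    next
      case False
      then have "y \<noteq> ?o" "?r x y" using xy unfolding E_less_def by auto
      moreover have "z \<noteq> ?o" "?r y z" using yz \<open>y \<noteq> ?o\<close> unfolding E_less_def by auto
      moreover have "x \<in> ?N" "y \<in> ?N" "z \<in> ?N" using x y z False calculation
        unfolding E_obj_def by auto
      ultimately show ?thesis using False tr unfolding E_less_def by blast
    qed
  next
    fix x y assume x: "x \<in> E_obj G" and y: "y \<in> E_obj G" and ne: "x \<noteq> y"
    show "E_less G x y \<or> E_less G y x"
    proof (cases "x = ?o \<or> y = ?o")
      case True then show ?thesis using ne unfolding E_less_def by auto
    next
      case False
      then have "x \<in> ?N" "y \<in> ?N" using x y unfolding E_obj_def by auto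
      then show ?thesis using False tot ne unfolding E_less_def by blast
    qed
  qed
  with fin show ?thesis by blast
qed

lemma maps:
  assumes "graph_hom G H h" "x \<in> E_obj G"
  shows "h x \<in> E_obj H"
proof -
  have r: "h (root G) = root H" using assms(1) unfolding graph_hom_def fin_graph_def by blast
  show ?thesis
  proof (cases "x = root G")
    case True then show ?thesis using r unfolding E_obj_def by simp
  next
    case False
    then have "(root G, x) \<in> arcs G" using assms(2) unfolding E_obj_def nbhd_def by auto
    then have "(h (root G), h x) \<in> arcs H" using assms(1) unfolding graph_hom_def by blast
    then show ?thesis using r unfolding E_obj_def nbhd_def by simp
  qed
qed

lemma part2:
  assumes "graph_hom G H h"
  shows "E_mor G h \<in> E_obj G \<rightarrow>\<^sub>E E_obj H \<and>
       (\<forall>x\<in>E_obj G. \<forall>y\<in>E_obj G. (E_less G x y \<or> x = y) \<longrightarrow>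
          (E_less H (E_mor G h x) (E_mor G h y) \<or> E_mor G h x = E_mor G h y))"
proof (intro conjI ballI impI)
  show "E_mor G h \<in> E_obj G \<rightarrow>\<^sub>E E_obj H"
    using maps[OF assms] unfolding E_mor_def by auto
next
  fix x y assume x: "x \<in> E_obj G" and y: "y \<in> E_obj G" and o: "E_less G x y \<or> x = y"
  have G: "fin_graph G" and hv: "\<forall>v\<in>verts G. h v = root H \<longleftrightarrow> v = root G"
    and ha: "\<forall>u v. (u, v) \<in> arcs G \<longrightarrow> (h u, h v) \<in> arcs H"
    and he: "\<forall>u v1 v2. (u, v1) \<in> arcs G \<longrightarrow> (u, v2) \<in> arcs G \<longrightarrow> eord G u v1 v2 \<longrightarrow>
          eord H (h u) (h v1) (h v2)"
    using assms unfolding graph_hom_def by auto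
  have vs: "E_obj G \<subseteq> verts G" using G unfolding fin_graph_def E_obj_def nbhd_def by auto
  have xr: "x \<noteq> root G \<Longrightarrow> (root G, x) \<in> arcs G" using x unfolding E_obj_def nbhd_def by auto
  have yr: "y \<noteq> root G \<Longrightarrow> (root G, y) \<in> arcs G" using y unfolding E_obj_def nbhd_def by auto
  have hr: "h (root G) = root H" using hv G unfolding fin_graph_def by auto
  have xv: "x \<in> verts G" and yv: "y \<in> verts G" using x y vs by auto
  have "E_less H (h x) (h y) \<or> h x = h y"
  proof (cases "x = root G")
    case True
    then show ?thesis using o yv hr hv unfolding E_less_def by auto
  next
    case False
    then have "y \<noteq> root G" "eord G (root G) x y \<or> x = y" using o unfolding E_less_def by auto
    then show ?thesis using False xv yv xr yr hr hv he unfolding E_less_def by metis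
  qed
  then show "E_less H (E_mor G h x) (E_mor G h y) \<or> E_mor G h x = E_mor G h y"
    using x y unfolding E_mor_def by simp
qed

theorem lemma9p3:
  shows
  "(\<forall>G :: 'a peo_graph. fin_graph G \<longrightarrow>
       finite (E_obj G) \<and> strict_linear_on (E_obj G) (E_less G)) \<and>
   (\<forall>(G :: 'a peo_graph) (H :: 'b peo_graph) h. graph_hom G H h \<longrightarrow>
       E_mor G h \<in> E_obj G \<rightarrow>\<^sub>E E_obj H \<and>
       (\<forall>x\<in>E_obj G. \<forall>y\<in>E_obj G. (E_less G x y \<or> x = y) \<longrightarrow>
          (E_less H (E_mor G h x) (E_mor G h y) \<or> E_mor G h x = E_mor G h y))) \<and>
   (\<forall>G :: 'a peo_graph. fin_graph G \<longrightarrow> E_mor G id = restrict id (E_obj G)) \<and>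
   (\<forall>(G :: 'a peo_graph) (H :: 'b peo_graph) (K :: 'c peo_graph) h g.
       graph_hom G H h \<longrightarrow> graph_hom H K g \<longrightarrow>
       E_mor G (g \<circ> h) = compose (E_obj G) (E_mor H g) (E_mor G h))"
proof -
  have c4: "\<forall>(G :: 'a peo_graph) (H :: 'b peo_graph) (K :: 'c peo_graph) h g.
       graph_hom G H h \<longrightarrow> graph_hom H K g \<longrightarrow>
       E_mor G (g \<circ> h) = compose (E_obj G) (E_mor H g) (E_mor G h)"
  proof (intro allI impI)
    fix G :: "'a peo_graph" and H :: "'b peo_graph" and K :: "'c peo_graph" and h g
    assume "graph_hom G H h" "graph_hom H K g"
    then show "E_mor G (g \<circ> h) = compose (E_obj G) (E_mor H g) (E_mor G h)"
      using maps[OF \<open>graph_hom G H h\<close>] unfolding E_mor_def compose_def by (auto intro!: ext)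
  qed
  have c3: "\<forall>G :: 'a peo_graph. fin_graph G \<longrightarrow> E_mor G id = restrict id (E_obj G)"
    by (simp add: E_mor_def)
  have c1: "\<forall>G :: 'a peo_graph. fin_graph G \<longrightarrow>
       finite (E_obj G) \<and> strict_linear_on (E_obj G) (E_less G)"
    using part1 by blast
  have c2: "\<forall>(G :: 'a peo_graph) (H :: 'b peo_graph) h. graph_hom G H h \<longrightarrow>
       E_mor G h \<in> E_obj G \<rightarrow>\<^sub>E E_obj H \<and>
       (\<forall>x\<in>E_obj G. \<forall>y\<in>E_obj G. (E_less G x y \<or> x = y) \<longrightarrow>
          (E_less H (E_mor G h x) (E_mor G h y) \<or> E_mor G h x = E_mor G h y))"
    using part2 by blast
  show ?thesis using c1 c2 c3 c4 by (rule conjI[OF _ conjI[OF _ conjI]])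
qed

end
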